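(* Let $\epsilon\in(0,1]$, $\delta\in(0,1)$, $0<\eta\le\frac{\epsilon}{40}$. Then the Multiplicative Weights mechanism $M^*_\eta$ is $4\eta$-approximately truthful, and for every belief matrix $P\in[0,1]^{n\times m}$ and ground truth $\vec\theta\in[0,1]^m$ with $m\ge\frac{5\ln(2n/\delta)}{\eta\epsilon}$, and every report matrix $R$ in which each $r_i$ is undominated for belief $p_i$, with probability at least $1-\delta$ over $\vec y\sim\vec\theta$ and $i\sim M^*_\eta(R,\vec y)$ the selected forecaster is $\epsilon$-optimal. In particular, with $\eta=\epsilon/40$, the event complexity satisfies $m^*(n,\epsilon,\delta)\le\frac{200\ln(2n/\delta)}{\epsilon^2}$.
   Context: Setting: $n\ge2$ forecasters, $m$ independent binary events with $\Pr[y_t=1]=\theta_t$ (written $\vec y\sim\vec\theta$); forecaster $i$ has beliefs $p_i\in[0,1]^m$ and reports $r_i\in[0,1]^m$. Quadratic score $S(q,y)=1-(y-q)^2$. Accuracy $a_i=1-\frac1m\sum_t(p_{it}-\theta_t)^2$; $i$ is $\epsilon$-optimal if $a_i\ge\max_ja_j-\epsilon$. Multiplicative Weights: $M^*_\eta(R,\vec y)_i=\exp(\eta\sum_tS(r_{it},y_t))/\sum_j\exp(\eta\sum_tS(r_{jt},y_t))$. $M(R;p_i)=\mathbb{E}_{\vec y\sim p_i}M(R,\vec y)$ with $y_t\sim\mathrm{Bernoulli}(p_{it})$ independently. For fixed $p_i$, $\hat r_i$ strictly dominates $r_i$ if $M(\hat r_i,R_{-i};p_i)_i>M(r_i,R_{-i};p_i)_i$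 for all $R_{-i}$; $r_i$ is undominated otherwise. $\gamma$-approximately truthful: for all $p_i$ an undominated report exists and all undominated $r_i$ satisfy $\|r_i-p_i\|_\infty\le\gamma$. A mechanism is $(\epsilon,\delta)$-accurate in setting $(n,m,P,\vec\theta)$ if for all $R$ consisting of undominated reports, with probability $\ge1-\delta$ over $\vec y\sim\vec\theta$ and $i\sim M(R,\vec y)$, $i$ is $\epsilon$-optimal; the event complexity $m^*(n,\epsilon,\delta)$ is the smallest $m$ such that the mechanism is $(\epsilon,\delta)$-accurate for all $(P,\vec\theta)$ with $n$ forecasters and $m$ events. *)

theory Defs
  imports Complex_Main "HOL-Library.FuncSet"
begin

text \<open>Forecasters are indexed by i < n, events by t < m.
  Belief / report matrices are functions nat \<Rightarrow> nat \<Rightarrow> real (row i, column t);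
  a realisation of the events is a function y :: nat \<Rightarrow> bool (y t = True means y_t = 1).\<close>

definition valid_vec :: "nat \<Rightarrow> (nat \<Rightarrow> real) \<Rightarrow> bool" where
  "valid_vec m v \<longleftrightarrow> (\<forall>t<m. 0 \<le> v t \<and> v t \<le> 1)"

definition outcomes :: "nat \<Rightarrow> (nat \<Rightarrow> bool) set" where
  "outcomes m = PiE {..<m} (\<lambda>_. (UNIV :: bool set))"

definition bprob :: "nat \<Rightarrow> (nat \<Rightarrow> real) \<Rightarrow> (nat \<Rightarrow> bool) \<Rightarrow> real" where
  "bprob m q y = (\<Prod>t<m. if y t then q t else 1 - q t)"

definition qscore :: "real \<Rightarrow> bool \<Rightarrow> real" where
  "qscore q b = 1 - (of_bool b - q)^2"

definition total_score :: "nat \<Rightarrow> (nat \<Rightarrow> real) \<Rightarrow> (nat \<Rightarrow> bool) \<Rightarrow> real" where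
  "total_score m r y = (\<Sum>t<m. qscore (r t) (y t))"

definition MW :: "real \<Rightarrow> nat \<Rightarrow> nat \<Rightarrow> (nat \<Rightarrow> nat \<Rightarrow> real) \<Rightarrow> (nat \<Rightarrow> bool) \<Rightarrow> nat \<Rightarrow> real" where
  "MW \<eta> n m R y i =
     exp (\<eta> * total_score m (R i) y) / (\<Sum>j<n. exp (\<eta> * total_score m (R j) y))"

definition MW_exp :: "real \<Rightarrow> nat \<Rightarrow> nat \<Rightarrow> (nat \<Rightarrow> nat \<Rightarrow> real) \<Rightarrow> (nat \<Rightarrow> real) \<Rightarrow> nat \<Rightarrow> real" where
  "MW_exp \<eta> n m R p i = (\<Sum>y\<in>outcomes m. bprob m p y * MW \<eta> n m R y i)"

definition strictly_dominates ::
  "real \<Rightarrow> nat \<Rightarrow> nat \<Rightarrow> nat \<Rightarrow> (nat \<Rightarrow> real) \<Rightarrow> (nat \<Rightarrow> real) \<Rightarrow> (nat \<Rightarrow> real) \<Rightarrow> bool" where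
  "strictly_dominates \<eta> n m i p r' r \<longleftrightarrow>
     (\<forall>R. (\<forall>j<n. j \<noteq> i \<longrightarrow> valid_vec m (R j)) \<longrightarrow>
          MW_exp \<eta> n m (R(i := r')) p i > MW_exp \<eta> n m (R(i := r)) p i)"

definition undominated ::
  "real \<Rightarrow> nat \<Rightarrow> nat \<Rightarrow> nat \<Rightarrow> (nat \<Rightarrow> real) \<Rightarrow> (nat \<Rightarrow> real) \<Rightarrow> bool" where
  "undominated \<eta> n m i p r \<longleftrightarrow>
     valid_vec m r \<and> \<not> (\<exists>r'. valid_vec m r' \<and> strictly_dominates \<eta> n m i p r' r)"

definition approx_truthful :: "real \<Rightarrow> nat \<Rightarrow> nat \<Rightarrow> real \<Rightarrow> bool" where
  "approx_truthful \<eta> n m \<gamma> \<longleftrightarrow>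
     (\<forall>i<n. \<forall>p. valid_vec m p \<longrightarrow>
        (\<exists>r. undominated \<eta> n m i p r) \<and>
        (\<forall>r. undominated \<eta> n m i p r \<longrightarrow> (\<forall>t<m. \<bar>r t - p t\<bar> \<le> \<gamma>)))"

definition accuracy :: "nat \<Rightarrow> (nat \<Rightarrow> real) \<Rightarrow> (nat \<Rightarrow> real) \<Rightarrow> real" where
  "accuracy m p \<theta> = 1 - (1 / real m) * (\<Sum>t<m. (p t - \<theta> t)^2)"

definition eps_optimal ::
  "nat \<Rightarrow> nat \<Rightarrow> (nat \<Rightarrow> nat \<Rightarrow> real) \<Rightarrow> (nat \<Rightarrow> real) \<Rightarrow> real \<Rightarrow> nat \<Rightarrow> bool" where
  "eps_optimal n m P \<theta> \<epsilon> i \<longleftrightarrow>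
     accuracy m (P i) \<theta> \<ge> (MAX j\<in>{..<n}. accuracy m (P j) \<theta>) - \<epsilon>"

definition mw_accurate ::
  "real \<Rightarrow> nat \<Rightarrow> nat \<Rightarrow> (nat \<Rightarrow> nat \<Rightarrow> real) \<Rightarrow> (nat \<Rightarrow> real) \<Rightarrow> real \<Rightarrow> real \<Rightarrow> bool" where
  "mw_accurate \<eta> n m P \<theta> \<epsilon> \<delta> \<longleftrightarrow>
     (\<forall>R. (\<forall>i<n. undominated \<eta> n m i (P i) (R i)) \<longrightarrow>
        (\<Sum>y\<in>outcomes m. bprob m \<theta> y *
            (\<Sum>i\<in>{i. i < n \<and> eps_optimal n m P \<theta> \<epsilon> i}. MW \<eta> n m R y i)) \<ge> 1 - \<delta>)"

definition event_complexity :: "real \<Rightarrow> nat \<Rightarrow> real \<Rightarrow> real \<Rightarrow> nat" where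
  "event_complexity \<eta> n \<epsilon> \<delta> =
     (LEAST m. \<forall>P \<theta>. (\<forall>i<n. valid_vec m (P i)) \<and> valid_vec m \<theta> \<longrightarrow>
                      mw_accurate \<eta> n m P \<theta> \<epsilon> \<delta>)"

end

theory Submission imports Defs "HOL-Analysis.Analysis" begin

lemma sum_bprob_prod:
  "(\<Sum>y\<in>outcomes m. bprob m q y * (\<Prod>t<m. g t (y t)))
     = (\<Prod>t<m. q t * g t True + (1 - q t) * g t False)"
proof -
  have "(\<Prod>t<m. q t * g t True + (1 - q t) * g t False)
      = (\<Prod>t<m. \<Sum>b\<in>(UNIV::bool set). (if b then q t else 1 - q t) * g t b)"
    by (simp add: UNIV_bool add.commute)
  also have "\<dots> = (\<Sum>y\<in>outcomes m. \<Prod>t<m. (if y t then q t else 1 - q t) * g t (y t))"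
    unfolding outcomes_def by (subst prod_sum_PiE) auto
  also have "\<dots> = (\<Sum>y\<in>outcomes m. bprob m q y * (\<Prod>t<m. g t (y t)))"
    unfolding bprob_def by (simp add: prod.distrib)
  finally show ?thesis by simp
qed

lemma sum_bprob: "(\<Sum>y\<in>outcomes m. bprob m q y) = 1"
  using sum_bprob_prod[of m q "\<lambda>_ _. 1"] by simp

lemma finite_outcomes[simp]: "finite (outcomes m)"
  unfolding outcomes_def by (intro finite_PiE) auto

lemma bprob_nonneg: "valid_vec m q \<Longrightarrow> 0 \<le> bprob m q y"
  unfolding bprob_def valid_vec_def by (intro prod_nonneg) auto

lemma total_score_upd:
  assumes "t < m"
  shows "total_score m (r(t:=x)) y = (\<Sum>t'\<in>{..<m}-{t}. qscore (r t') (y t')) + qscore x (y t)"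
proof -
  have "total_score m (r(t:=x)) y = qscore x (y t) + (\<Sum>t'\<in>{..<m}-{t}. qscore ((r(t:=x)) t') (y t'))"
    unfolding total_score_def using assms by (subst sum.remove[of _ t]) auto
  also have "(\<Sum>t'\<in>{..<m}-{t}. qscore ((r(t:=x)) t') (y t')) = (\<Sum>t'\<in>{..<m}-{t}. qscore (r t') (y t'))"
    by (intro sum.cong) auto
  finally show ?thesis by (metis add.commute)
qed

lemma MW_upd:
  assumes "i < n"
  shows "MW \<eta> n m (R(i:=r)) y i = exp (\<eta> * total_score m r y) /
     (exp (\<eta> * total_score m r y) + (\<Sum>j\<in>{..<n}-{i}. exp (\<eta> * total_score m (R j) y)))"
proof -
  have "(\<Sum>j<n. exp (\<eta> * total_score m ((R(i:=r)) j) y)) =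
     exp (\<eta> * total_score m r y) + (\<Sum>j\<in>{..<n}-{i}. exp (\<eta> * total_score m ((R(i:=r)) j) y))"
    using assms by (subst sum.remove[of _ i]) auto
  also have "(\<Sum>j\<in>{..<n}-{i}. exp (\<eta> * total_score m ((R(i:=r)) j) y)) = (\<Sum>j\<in>{..<n}-{i}. exp (\<eta> * total_score m (R j) y))"
    by (intro sum.cong) auto
  finally show ?thesis unfolding MW_def by simp
qed

lemma deriv_sig:
  assumes "Z > 0"
  shows "((\<lambda>x. exp (\<eta> * (c + qscore x b)) / (exp (\<eta> * (c + qscore x b)) + Z)) has_real_derivative
     (\<eta> * (2 * (of_bool b - x)) * (exp (\<eta> * (c + qscore x b)) * Z / (exp (\<eta> * (c + qscore x b)) + Z)^2))) (at x)"
proof -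
  have pos: "exp (\<eta> * (c + qscore x b)) + Z \<noteq> 0" using assms
    by (metis add_pos_pos exp_gt_zero less_irrefl)
  have d1: "((\<lambda>x. \<eta> * (c + qscore x b)) has_real_derivative \<eta> * (2 * (of_bool b - x))) (at x)"
    unfolding qscore_def by (rule derivative_eq_intros refl)+ (simp add: algebra_simps)
  have d2: "((\<lambda>x. exp (\<eta> * (c + qscore x b))) has_real_derivative exp (\<eta> * (c + qscore x b)) * (\<eta> * (2 * (of_bool b - x)))) (at x)"
    by (rule DERIV_chain2[OF DERIV_exp d1])
  have d3: "((\<lambda>x. exp (\<eta> * (c + qscore x b)) + Z) has_real_derivative exp (\<eta> * (c + qscore x b)) * (\<eta> * (2 * (of_bool b - x)))) (at x)"
    using d2 by (rule derivative_eq_intros) auto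
  note d4 = DERIV_divide[OF d2 d3 pos]
  show ?thesis
    using d4 by (simp add: power2_eq_square field_simps)
qed

lemma K_ratio:
  fixes E0 E1 Z0 Z1 a :: real
  assumes "E0 > 0" "Z0 > 0" "E1 > 0" "Z1 > 0" "a \<ge> 0"
    "exp (-a) * E0 \<le> E1" "E1 \<le> exp a * E0" "exp (-a) * Z0 \<le> Z1" "Z1 \<le> exp a * Z0"
  shows "E1 * Z1 / (E1 + Z1)^2 \<ge> exp (-4*a) * (E0 * Z0 / (E0 + Z0)^2)"
proof -
  have "E1 * Z1 \<ge> (exp (-a) * E0) * (exp (-a) * Z0)"
    using assms by (intro mult_mono) auto
  also have "(exp (-a) * E0) * (exp (-a) * Z0) = (exp (-a) * exp (-a)) * (E0*Z0)"
    by (simp add: algebra_simps)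
  also have "exp (-a) * exp (-a) = exp (-2*a)" by (simp add: mult_exp_exp)
  finally have num: "E1 * Z1 \<ge> exp (-2*a) * (E0*Z0)" .
  have "E1 + Z1 \<le> exp a * (E0 + Z0)" using assms by (simp add: algebra_simps)
  hence "(E1 + Z1)^2 \<le> (exp a * (E0 + Z0))^2" using assms by (intro power_mono) auto
  also have "\<dots> = (exp a * exp a) * (E0+Z0)^2"
    by (simp add: power_mult_distrib power2_eq_square)
  also have "exp a * exp a = exp (2*a)" by (simp add: mult_exp_exp)
  finally have den: "(E1 + Z1)^2 \<le> exp (2*a) * (E0+Z0)^2" .
  have e4: "exp (-4*a) = exp (-2*a) / exp (2*a)" by (simp add: exp_diff[symmetric])
  have "exp (-4*a) * (E0 * Z0 / (E0 + Z0)^2) = exp (-2*a) * (E0*Z0) / (exp (2*a) * (E0+Z0)^2)"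
    unfolding e4 by (simp add: field_simps)
  also have "\<dots> \<le> E1 * Z1 / (E1 + Z1)^2"
    using num den assms by (intro frac_le) auto
  finally show ?thesis .
qed

lemma qscore_range: "0 \<le> q \<Longrightarrow> q \<le> 1 \<Longrightarrow> 0 \<le> qscore q b \<and> qscore q b \<le> 1"
  unfolding qscore_def by (cases b) (auto simp: power2_eq_square mult_le_one)

lemma ts_diff:
  assumes "t < m" "0 \<le> q t" "q t \<le> 1"
  shows "\<bar>total_score m q y - total_score m q (y(t:=b))\<bar> \<le> 1"
proof -
  have e: "\<And>y. total_score m q y = (\<Sum>t'\<in>{..<m}-{t}. qscore (q t') (y t')) + qscore (q t) (y t)"
    using total_score_upd[OF assms(1), of q "q t"] by simp
  have "(\<Sum>t'\<in>{..<m}-{t}. qscore (q t') ((y(t:=b)) t')) = (\<Sum>t'\<in>{..<m}-{t}. qscore (q t') (y t'))"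
    by (intro sum.cong) auto
  then show ?thesis using e[of y] e[of "y(t:=b)"] qscore_range[OF assms(2,3), of "y t"] qscore_range[OF assms(2,3), of b]
    by (auto simp: abs_le_iff)
qed

lemma exp_ratio:
  fixes \<eta> u v :: real
  assumes "\<eta> \<ge> 0" "\<bar>u - v\<bar> \<le> 1"
  shows "exp (-\<eta>) * exp (\<eta> * v) \<le> exp (\<eta> * u) \<and> exp (\<eta> * u) \<le> exp \<eta> * exp (\<eta> * v)"
proof -
  have "\<eta> * (v - u) \<le> \<eta> * 1" "\<eta> * (u - v) \<le> \<eta> * 1"
    using assms by (intro mult_left_mono; simp)+
  then have "-\<eta> + \<eta> * v \<le> \<eta> * u" "\<eta> * u \<le> \<eta> + \<eta> * v" by (simp_all add: algebra_simps)
  then show ?thesis by (simp add: mult_exp_exp)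
qed

definition Zf :: "real \<Rightarrow> nat \<Rightarrow> nat \<Rightarrow> (nat \<Rightarrow> nat \<Rightarrow> real) \<Rightarrow> nat \<Rightarrow> (nat \<Rightarrow> bool) \<Rightarrow> real" where
  "Zf \<eta> n m R i y = (\<Sum>j\<in>{..<n}-{i}. exp (\<eta> * total_score m (R j) y))"
definition Ef :: "real \<Rightarrow> nat \<Rightarrow> (nat \<Rightarrow> real) \<Rightarrow> nat \<Rightarrow> real \<Rightarrow> (nat \<Rightarrow> bool) \<Rightarrow> real" where
  "Ef \<eta> m r t x y = exp (\<eta> * total_score m (r(t:=x)) y)"
definition Kf where
  "Kf \<eta> n m R i r t x y = Ef \<eta> m r t x y * Zf \<eta> n m R i y / (Ef \<eta> m r t x y + Zf \<eta> n m R i y)^2"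
definition Dfun where
  "Dfun \<eta> n m R i r t p x = (\<Sum>y\<in>outcomes m. bprob m p y * (\<eta> * (2 * (of_bool (y t) - x)) * Kf \<eta> n m R i r t x y))"

lemma Zf_pos:
  assumes "n \<ge> 2" "i < n"
  shows "Zf \<eta> n m R i y > 0"
proof -
  define j where "j = (if i = 0 then 1 else (0::nat))"
  have "j < n" "j \<noteq> i" using assms unfolding j_def by auto
  then show ?thesis unfolding Zf_def
    by (intro sum_pos) auto
qed

lemma G_deriv:
  assumes "n \<ge> 2" "i < n" "t < m"
  shows "((\<lambda>x. MW_exp \<eta> n m (R(i := r(t:=x))) p i) has_real_derivative Dfun \<eta> n m R i r t p x) (at x)"
proof -
  define cc where "cc y = (\<Sum>t'\<in>{..<m}-{t}. qscore (r t') (y t'))" for y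
  have ts: "\<And>x y. total_score m (r(t:=x)) y = cc y + qscore x (y t)"
    unfolding cc_def using total_score_upd[OF assms(3)] by simp
  have G: "(\<lambda>x. MW_exp \<eta> n m (R(i := r(t:=x))) p i) =
     (\<lambda>x. \<Sum>y\<in>outcomes m. bprob m p y * (exp (\<eta> * (cc y + qscore x (y t))) /
          (exp (\<eta> * (cc y + qscore x (y t))) + Zf \<eta> n m R i y)))"
    unfolding MW_exp_def MW_upd[OF assms(2)] ts Zf_def by simp
  have "((\<lambda>x. \<Sum>y\<in>outcomes m. bprob m p y * (exp (\<eta> * (cc y + qscore x (y t))) /
          (exp (\<eta> * (cc y + qscore x (y t))) + Zf \<eta> n m R i y))) has_real_derivative
        (\<Sum>y\<in>outcomes m. bprob m p y * (\<eta> * (2 * (of_bool (y t) - x)) * (exp (\<eta> * (cc y + qscore x (y t))) * Zf \<eta> n m R i y / (exp (\<eta> * (cc y + qscore x (y t))) + Zf \<eta> n m R i y)^2)))) (at x)"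
    by (intro DERIV_sum DERIV_cmult deriv_sig Zf_pos assms)
  then show ?thesis unfolding G Dfun_def Kf_def Ef_def ts .
qed

lemma outcomes_split:
  assumes "t < m"
  shows "(\<Sum>y\<in>outcomes m. f y) = (\<Sum>y\<in>{y\<in>outcomes m. y t}. f y + f (y(t:=False)))"
proof -
  let ?A = "{y\<in>outcomes m. y t}" and ?B = "{y\<in>outcomes m. \<not> y t}"
  have un: "outcomes m = ?A \<union> ?B" by auto
  have "(\<Sum>y\<in>outcomes m. f y) = sum f ?A + sum f ?B"
    by (subst un, rule sum.union_disjoint) auto
  moreover have B: "?B = (\<lambda>y. y(t:=False)) ` ?A"
  proof
    show "?B \<subseteq> (\<lambda>y. y(t:=False)) ` ?A"
    proof
      fix y assume y: "y \<in> ?B"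
      then have "y(t:=True) \<in> ?A" using assms by (auto simp: outcomes_def PiE_iff extensional_def)
      moreover have "y = (y(t:=True))(t:=False)" using y by (auto simp: fun_eq_iff)
      ultimately show "y \<in> (\<lambda>y. y(t:=False)) ` ?A" by blast
    qed
    show "(\<lambda>y. y(t:=False)) ` ?A \<subseteq> ?B"
      using assms by (auto simp: outcomes_def PiE_iff extensional_def)
  qed
  moreover have "inj_on (\<lambda>y. y(t:=False)) ?A"
    by (auto simp: inj_on_def fun_eq_iff)
  then have "sum f ((\<lambda>y. y(t:=False)) ` ?A) = (\<Sum>y\<in>?A. f (y(t:=False)))"
    by (simp add: sum.reindex)
  ultimately show ?thesis by (simp add: sum.distrib)
qed

definition Wf where "Wf p m t y = (\<Prod>t'\<in>{..<m}-{t}. if y t' then p t' else 1 - p t')"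

lemma bprob_split: "t < m \<Longrightarrow> bprob m p y = (if y t then p t else 1 - p t) * Wf p m t y"
  unfolding bprob_def Wf_def by (subst prod.remove[of _ t]) auto

lemma Wf_upd: "Wf p m t (y(t:=b)) = Wf p m t y"
  unfolding Wf_def by (intro prod.cong) auto

lemma Wf_nonneg: "valid_vec m p \<Longrightarrow> Wf p m t y \<ge> 0"
  unfolding Wf_def valid_vec_def by (intro prod_nonneg) auto

lemma D_pair:
  assumes "t < m"
  shows "Dfun \<eta> n m R i r t p x = (\<Sum>y\<in>{y\<in>outcomes m. y t}. Wf p m t y * (2*\<eta>) *
      (p t * (1 - x) * Kf \<eta> n m R i r t x y - (1 - p t) * x * Kf \<eta> n m R i r t x (y(t:=False))))"
  unfolding Dfun_def outcomes_split[OF assms]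
  by (intro sum.cong refl) (simp add: bprob_split[OF assms] Wf_upd algebra_simps)

lemma K_bounds:
  assumes n2: "n \<ge> 2" and i: "i < n" and t: "t < m" and eta: "\<eta> \<ge> 0"
    and vR: "\<forall>j<n. j \<noteq> i \<longrightarrow> valid_vec m (R j)" and x: "0 \<le> x" "x \<le> 1"
  shows "Kf \<eta> n m R i r t x y \<ge> exp (-4*\<eta>) * Kf \<eta> n m R i r t x (y(t:=b))
     \<and> Kf \<eta> n m R i r t x y > 0"
proof -
  let ?y' = "y(t:=b)"
  let ?E1 = "Ef \<eta> m r t x y" and ?E0 = "Ef \<eta> m r t x ?y'"
  let ?Z1 = "Zf \<eta> n m R i y" and ?Z0 = "Zf \<eta> n m R i ?y'"
  have "\<bar>total_score m (r(t:=x)) y - total_score m (r(t:=x)) ?y'\<bar> \<le> 1"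
    using ts_diff[of t m "r(t:=x)"] t x by simp
  from exp_ratio[OF eta this] have E: "exp (-\<eta>) * ?E0 \<le> ?E1" "?E1 \<le> exp \<eta> * ?E0"
    unfolding Ef_def by auto
  have tj: "exp (-\<eta>) * exp (\<eta> * total_score m (R j) ?y') \<le> exp (\<eta> * total_score m (R j) y) \<and>
      exp (\<eta> * total_score m (R j) y) \<le> exp \<eta> * exp (\<eta> * total_score m (R j) ?y')"
    if "j \<in> {..<n}-{i}" for j
  proof -
    have "valid_vec m (R j)" using vR that by auto
    then have "\<bar>total_score m (R j) y - total_score m (R j) ?y'\<bar> \<le> 1"
      using ts_diff[of t m "R j"] t unfolding valid_vec_def by simp
    then show ?thesis using exp_ratio[OF eta] by blast
  qed
  have Z1: "exp (-\<eta>) * ?Z0 \<le> ?Z1" unfolding Zf_def sum_distrib_left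
    using tj by (intro sum_mono) auto
  have Z2: "?Z1 \<le> exp \<eta> * ?Z0" unfolding Zf_def sum_distrib_left
    using tj by (intro sum_mono) auto
  have pos: "?E0 > 0" "?E1 > 0" "?Z0 > 0" "?Z1 > 0"
    using Zf_pos[OF n2 i] unfolding Ef_def by auto
  have "?E1 * ?Z1 / (?E1 + ?Z1)^2 \<ge> exp (-4*\<eta>) * (?E0 * ?Z0 / (?E0 + ?Z0)^2)"
    using K_ratio[OF pos(1) pos(3) pos(2) pos(4) eta E Z1 Z2] .
  moreover have "?E1 * ?Z1 / (?E1 + ?Z1)^2 > 0" using pos by simp
  ultimately show ?thesis unfolding Kf_def by simp
qed

lemma bracket_pos:
  fixes p x K0 K1 \<eta> :: real
  assumes "0 \<le> p" "p \<le> 1" "0 \<le> x" "x \<le> 1" "K0 > 0" "K1 \<ge> exp (-4*\<eta>) * K0" "x < p - 4*\<eta>" "\<eta> > 0"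
  shows "p * (1 - x) * K1 - (1 - p) * x * K0 > 0"
proof -
  have a: "p * (1 - x) \<ge> 0" "p * (1 - x) \<le> 1" using assms by (auto simp: mult_le_one)
  have e: "exp (-4*\<eta>) \<ge> 1 - 4*\<eta>" using exp_ge_add_one_self[of "-4*\<eta>"] by simp
  have "p * (1 - x) * K1 \<ge> p * (1 - x) * (exp (-4*\<eta>) * K0)"
    using a assms by (intro mult_left_mono) auto
  also have "p * (1 - x) * (exp (-4*\<eta>) * K0) \<ge> p * (1 - x) * ((1 - 4*\<eta>) * K0)"
    using a assms e by (intro mult_left_mono mult_right_mono) auto
  finally have b: "p * (1 - x) * K1 \<ge> K0 * (p * (1 - x) - 4*\<eta> * (p * (1-x)))"
    by (simp add: algebra_simps)
  have "4*\<eta> * (p * (1-x)) \<le> 4*\<eta> * 1" using a assms by (intro mult_left_mono) auto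
  then have "p * (1 - x) - 4*\<eta> * (p * (1-x)) - (1 - p) * x > 0" using assms
    by (simp add: algebra_simps)
  then have "K0 * (p * (1 - x) - 4*\<eta> * (p * (1-x)) - (1 - p) * x) > 0" using assms by simp
  then show ?thesis using b by (simp add: algebra_simps)
qed

lemma bracket_neg:
  fixes p x K0 K1 \<eta> :: real
  assumes "0 \<le> p" "p \<le> 1" "0 \<le> x" "x \<le> 1" "K1 > 0" "K0 \<ge> exp (-4*\<eta>) * K1" "x > p + 4*\<eta>" "\<eta> > 0"
  shows "p * (1 - x) * K1 - (1 - p) * x * K0 < 0"
proof -
  have a: "(1 - p) * x \<ge> 0" "(1 - p) * x \<le> 1" using assms by (auto simp: mult_le_one)
  have e: "exp (-4*\<eta>) \<ge> 1 - 4*\<eta>" using exp_ge_add_one_self[of "-4*\<eta>"] by simp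
  have "(1 - p) * x * K0 \<ge> (1 - p) * x * (exp (-4*\<eta>) * K1)"
    using a assms by (intro mult_left_mono) auto
  also have "(1 - p) * x * (exp (-4*\<eta>) * K1) \<ge> (1 - p) * x * ((1 - 4*\<eta>) * K1)"
    using a assms e by (intro mult_left_mono mult_right_mono) auto
  finally have b: "(1 - p) * x * K0 \<ge> K1 * ((1 - p) * x - 4*\<eta> * ((1 - p) * x))"
    by (simp add: algebra_simps)
  have "4*\<eta> * ((1 - p) * x) \<le> 4*\<eta> * 1" using a assms by (intro mult_left_mono) auto
  then have "(1 - p) * x - 4*\<eta> * ((1 - p) * x) - p * (1 - x) > 0" using assms
    by (simp add: algebra_simps)
  then have "K1 * ((1 - p) * x - 4*\<eta> * ((1 - p) * x) - p * (1 - x)) > 0" using assms by simp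
  then show ?thesis using b by (simp add: algebra_simps)
qed

lemma special_y:
  assumes t: "t < m" and vp: "valid_vec m p"
  shows "\<exists>y\<in>{y\<in>outcomes m. y t}. Wf p m t y > 0"
proof -
  define ys where "ys = (\<lambda>t'. if t' < m then (if t' = t then True else p t' > 0) else undefined)"
  have "ys \<in> {y\<in>outcomes m. y t}" using t unfolding ys_def outcomes_def by (auto simp: PiE_iff extensional_def)
  moreover have "Wf p m t ys > 0" unfolding Wf_def
  proof (intro prod_pos)
    fix t' assume "t' \<in> {..<m} - {t}"
    then show "0 < (if ys t' then p t' else 1 - p t')"
      using vp unfolding ys_def valid_vec_def by (auto simp: not_less)
  qed
  ultimately show ?thesis by blast
qed

lemma D_sign:
  assumes n2: "n \<ge> 2" and i: "i < n" and t: "t < m" and eta: "\<eta> > 0"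
    and vR: "\<forall>j<n. j \<noteq> i \<longrightarrow> valid_vec m (R j)" and vp: "valid_vec m p" and x: "0 \<le> x" "x \<le> 1"
  shows "x < p t - 4*\<eta> \<Longrightarrow> Dfun \<eta> n m R i r t p x > 0"
    and "x > p t + 4*\<eta> \<Longrightarrow> Dfun \<eta> n m R i r t p x < 0"
proof -
  let ?A = "{y\<in>outcomes m. y t}"
  let ?K = "Kf \<eta> n m R i r t x"
  have pt: "0 \<le> p t" "p t \<le> 1" using vp t unfolding valid_vec_def by auto
  have KK: "?K y \<ge> exp (-4*\<eta>) * ?K (y(t:=False)) \<and> ?K (y(t:=False)) \<ge> exp (-4*\<eta>) * ?K y
      \<and> ?K y > 0 \<and> ?K (y(t:=False)) > 0" if "y \<in> ?A" for y
  proof -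
    have yy: "(y(t:=False))(t:=True) = y" using that by (auto simp: fun_eq_iff)
    show ?thesis
      using K_bounds[OF n2 i t less_imp_le[OF eta] vR x, where y=y and b=False and r=r]
        K_bounds[OF n2 i t less_imp_le[OF eta] vR x, where y="y(t:=False)" and b=True and r=r]
      unfolding yy by auto
  qed
  obtain ys where ys: "ys \<in> ?A" "Wf p m t ys > 0" using special_y[OF t vp] by blast
  have fin: "finite ?A" by simp
  show "Dfun \<eta> n m R i r t p x > 0" if hx: "x < p t - 4*\<eta>"
  proof -
    have br: "p t * (1 - x) * ?K y - (1 - p t) * x * ?K (y(t:=False)) > 0" if "y \<in> ?A" for y
      using bracket_pos[OF pt x _ _ hx eta] KK[OF that] by blast
    show ?thesis unfolding D_pair[OF t]
    proof (rule sum_pos2[OF fin ys(1)])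
      show "0 < Wf p m t ys * (2 * \<eta>) * (p t * (1 - x) * ?K ys - (1 - p t) * x * ?K (ys(t := False)))"
        using ys br[OF ys(1)] eta by simp
      fix y assume "y \<in> ?A"
      then show "0 \<le> Wf p m t y * (2 * \<eta>) * (p t * (1 - x) * ?K y - (1 - p t) * x * ?K (y(t := False)))"
        using br Wf_nonneg[OF vp] eta by (intro mult_nonneg_nonneg) (auto intro: less_imp_le)
    qed
  qed
  show "Dfun \<eta> n m R i r t p x < 0" if hx: "x > p t + 4*\<eta>"
  proof -
    have br: "p t * (1 - x) * ?K y - (1 - p t) * x * ?K (y(t:=False)) < 0" if "y \<in> ?A" for y
      using bracket_neg[OF pt x _ _ hx eta] KK[OF that] by blast
    have "0 < (\<Sum>y\<in>?A. - (Wf p m t y * (2 * \<eta>) * (p t * (1 - x) * ?K y - (1 - p t) * x * ?K (y(t := False)))))"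
    proof (rule sum_pos2[OF fin ys(1)])
      have "0 < Wf p m t ys * (2 * \<eta>) * (- (p t * (1 - x) * ?K ys - (1 - p t) * x * ?K (ys(t := False))))"
        using ys br[OF ys(1)] eta by simp
      then show "0 < - (Wf p m t ys * (2 * \<eta>) * (p t * (1 - x) * ?K ys - (1 - p t) * x * ?K (ys(t := False))))"
        by (simp only: mult_minus_right)
      fix y assume y: "y \<in> ?A"
      have "0 \<le> Wf p m t y * (2 * \<eta>) * (- (p t * (1 - x) * ?K y - (1 - p t) * x * ?K (y(t := False))))"
        using br[OF y] Wf_nonneg[OF vp] eta by (intro mult_nonneg_nonneg) (auto intro: less_imp_le)
      then show "0 \<le> - (Wf p m t y * (2 * \<eta>) * (p t * (1 - x) * ?K y - (1 - p t) * x * ?K (y(t := False))))"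
        by (simp only: mult_minus_right)
    qed
    then show ?thesis unfolding D_pair[OF t] sum_negf by simp
  qed
qed

lemma undom_close:
  assumes n2: "n \<ge> 2" and i: "i < n" and eta: "\<eta> > 0" and t: "t < m"
    and vp: "valid_vec m p" and und: "undominated \<eta> n m i p r"
  shows "\<bar>r t - p t\<bar> \<le> 4*\<eta>"
proof (rule ccontr)
  assume "\<not> ?thesis"
  hence far: "r t < p t - 4*\<eta> \<or> r t > p t + 4*\<eta>" by auto
  from und have vr: "valid_vec m r" and nd: "\<not>(\<exists>r'. valid_vec m r' \<and> strictly_dominates \<eta> n m i p r' r)"
    by (auto simp: undominated_def)
  have rt: "0 \<le> r t" "r t \<le> 1" "0 \<le> p t" "p t \<le> 1" using vr vp t unfolding valid_vec_def by auto
  have upd: "r(t := r t) = r" by simp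
  from far show False
  proof
    assume h: "r t < p t - 4*\<eta>"
    define x0 where "x0 = (r t + (p t - 4*\<eta>)) / 2"
    have x0: "r t < x0" "x0 < p t - 4*\<eta>" using h unfolding x0_def by auto
    have "valid_vec m (r(t:=x0))" using vr x0 rt eta unfolding valid_vec_def by auto
    moreover have "strictly_dominates \<eta> n m i p (r(t:=x0)) r"
      unfolding strictly_dominates_def
    proof (intro allI impI)
      fix R assume vR: "\<forall>j<n. j \<noteq> i \<longrightarrow> valid_vec m (R j)"
      have "MW_exp \<eta> n m (R(i := r(t:=r t))) p i < MW_exp \<eta> n m (R(i := r(t:=x0))) p i"
      proof (rule DERIV_pos_imp_increasing[OF x0(1)])
        fix x assume "r t \<le> x" "x \<le> x0"
        then show "\<exists>y. ((\<lambda>x. MW_exp \<eta> n m (R(i := r(t:=x))) p i) has_real_derivative y) (at x) \<and> 0 < y"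
          using G_deriv[OF n2 i t] D_sign(1)[OF n2 i t eta vR vp] x0 rt eta by force
      qed
      then show "MW_exp \<eta> n m (R(i := r)) p i < MW_exp \<eta> n m (R(i := r(t:=x0))) p i" by simp
    qed
    ultimately show False using nd by blast
  next
    assume h: "r t > p t + 4*\<eta>"
    define x0 where "x0 = (r t + (p t + 4*\<eta>)) / 2"
    have x0: "x0 < r t" "x0 > p t + 4*\<eta>" using h unfolding x0_def by auto
    have "valid_vec m (r(t:=x0))" using vr x0 rt eta unfolding valid_vec_def by auto
    moreover have "strictly_dominates \<eta> n m i p (r(t:=x0)) r"
      unfolding strictly_dominates_def
    proof (intro allI impI)
      fix R assume vR: "\<forall>j<n. j \<noteq> i \<longrightarrow> valid_vec m (R j)"
      have "MW_exp \<eta> n m (R(i := r(t:=r t))) p i < MW_exp \<eta> n m (R(i := r(t:=x0))) p i"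
      proof (rule DERIV_neg_imp_decreasing[OF x0(1)])
        fix x assume "x0 \<le> x" "x \<le> r t"
        then show "\<exists>y. ((\<lambda>x. MW_exp \<eta> n m (R(i := r(t:=x))) p i) has_real_derivative y) (at x) \<and> y < 0"
          using G_deriv[OF n2 i t] D_sign(2)[OF n2 i t eta vR vp] x0 rt eta by force
      qed
      then show "MW_exp \<eta> n m (R(i := r)) p i < MW_exp \<eta> n m (R(i := r(t:=x0))) p i" by simp
    qed
    ultimately show False using nd by blast
  qed
qed

lemma cont_ts: "continuous_on UNIV (\<lambda>r::nat \<Rightarrow> real. total_score m r y)"
  unfolding total_score_def qscore_def
  by (intro continuous_intros continuous_on_product_coordinates)

lemma undom_exists:
  assumes n2: "n \<ge> 2" and i: "i < n"
  shows "\<exists>r. undominated \<eta> n m i p r"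
proof -
  define R0 :: "nat \<Rightarrow> nat \<Rightarrow> real" where "R0 = (\<lambda>j t. 0)"
  define f where "f r = MW_exp \<eta> n m (R0(i:=r)) p i" for r
  have f: "f = (\<lambda>r. \<Sum>y\<in>outcomes m. bprob m p y * (exp (\<eta> * total_score m r y) /
        (exp (\<eta> * total_score m r y) + Zf \<eta> n m R0 i y)))"
    unfolding f_def MW_exp_def MW_upd[OF i] Zf_def by simp
  define S :: "(nat \<Rightarrow> real) set" where "S = PiE UNIV (\<lambda>t. if t < m then {0..1} else {0})"
  have "compactin (product_topology (\<lambda>_. euclidean) UNIV) S"
    unfolding S_def compactin_PiE by auto
  then have cS: "compact S" by (simp add: euclidean_product_topology)
  have neS: "(\<lambda>_. 0) \<in> S" unfolding S_def by auto
  have dpos: "exp (\<eta> * total_score m r y) + Zf \<eta> n m R0 i y \<noteq> 0" for r y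
      using Zf_pos[OF n2 i, of \<eta> m R0 y] by (metis add_pos_pos exp_gt_zero less_irrefl)
  have "continuous_on UNIV f" unfolding f
    by (intro continuous_intros cont_ts) (simp_all add: dpos)
  then have "continuous_on S f" by (rule continuous_on_subset) auto
  then obtain rs where rs: "rs \<in> S" "\<And>r. r \<in> S \<Longrightarrow> f r \<le> f rs"
    using continuous_attains_sup[OF cS _] neS by blast
  have vrs: "valid_vec m rs" using rs(1) unfolding S_def valid_vec_def by (auto simp: PiE_iff) (metis atLeastAtMost_iff)+
  have "undominated \<eta> n m i p rs"
    unfolding undominated_def
  proof (intro conjI vrs notI)
    assume "\<exists>r'. valid_vec m r' \<and> strictly_dominates \<eta> n m i p r' rs"
    then obtain r' where r': "valid_vec m r'" "strictly_dominates \<eta> n m i p r' rs" by blast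
    have "\<forall>j<n. j \<noteq> i \<longrightarrow> valid_vec m (R0 j)" unfolding R0_def valid_vec_def by auto
    then have lt: "f r' > f rs" using r'(2) unfolding strictly_dominates_def f_def by blast
    define r'' where "r'' = (\<lambda>t. if t < m then r' t else 0)"
    have "r'' \<in> S" using r'(1) unfolding r''_def S_def valid_vec_def by auto
    moreover have "\<And>y. total_score m r'' y = total_score m r' y"
      unfolding total_score_def r''_def by (intro sum.cong) auto
    then have "f r'' = f r'" unfolding f by simp
    ultimately show False using rs(2) lt by fastforce
  qed
  then show ?thesis by blast
qed

lemma exp_quad:
  fixes z :: real
  assumes "\<bar>z\<bar> \<le> 1"
  shows "exp z \<le> 1 + z + z^2"
proof (cases "z \<ge> 0")
  case True then show ?thesis using exp_bound[of z] assms by simp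
next
  case False
  have e1: "exp z * exp (-z) = 1" by (rule exp_minus_inverse)
  have e2: "exp (-z) \<ge> 1 - z" using exp_ge_add_one_self[of "-z"] by simp
  have "exp z * (1 - z) \<le> exp z * exp (-z)" using e2 by (intro mult_left_mono) auto
  then have "exp z * (1 - z) \<le> 1" using e1 by simp
  moreover have "(1 + z + z^2) * (1 - z) = 1 - z^3" by (simp add: algebra_simps power2_eq_square power3_eq_cube)
  moreover have "z^3 \<le> 0" unfolding power3_eq_cube using False
    by (metis mult_nonneg_nonpos zero_le_square not_le less_imp_le)
  ultimately have "exp z * (1 - z) \<le> (1 + z + z^2) * (1 - z)" by linarith
  then show ?thesis using False by (simp add: mult_le_cancel_right)
qed

lemma factor_bound:
  fixes a c \<theta> \<eta> :: real
  assumes "0 \<le> a" "a \<le> 1" "0 \<le> c" "c \<le> 1" "0 \<le> \<theta>" "\<theta> \<le> 1" "0 \<le> \<eta>" "\<eta> \<le> 1"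
  shows "\<theta> * exp (\<eta> * (qscore a True - qscore c True)) + (1 - \<theta>) * exp (\<eta> * (qscore a False - qscore c False))
     \<le> exp (\<eta> * ((c - \<theta>)^2 - (a - \<theta>)^2) + \<eta>^2)"
proof -
  have X: "\<bar>qscore a b - qscore c b\<bar> \<le> 1" for b
    using qscore_range[of a b] qscore_range[of c b] assms by (auto simp: abs_le_iff)
  have bnd: "exp (\<eta> * (qscore a b - qscore c b)) \<le> 1 + \<eta> * (qscore a b - qscore c b) + \<eta>^2" for b
  proof -
    have "\<bar>\<eta> * (qscore a b - qscore c b)\<bar> \<le> 1 * 1"
      unfolding abs_mult using X[of b] assms by (intro mult_mono) auto
    then have "exp (\<eta> * (qscore a b - qscore c b)) \<le> 1 + \<eta> * (qscore a b - qscore c b) + (\<eta> * (qscore a b - qscore c b))^2"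
      using exp_quad by simp
    moreover have "(\<eta> * (qscore a b - qscore c b))^2 \<le> \<eta>^2 * 1"
    proof -
      have "(qscore a b - qscore c b)^2 \<le> 1"
        using X[of b] by (metis abs_le_square_iff abs_one one_power2)
      then show ?thesis unfolding power_mult_distrib by (intro mult_left_mono) auto
    qed
    ultimately show ?thesis by simp
  qed
  have "\<theta> * exp (\<eta> * (qscore a True - qscore c True)) + (1 - \<theta>) * exp (\<eta> * (qscore a False - qscore c False))
     \<le> \<theta> * (1 + \<eta> * (qscore a True - qscore c True) + \<eta>^2) + (1 - \<theta>) * (1 + \<eta> * (qscore a False - qscore c False) + \<eta>^2)"
    using assms bnd by (intro add_mono mult_left_mono) auto
  also have "\<dots> = 1 + (\<eta> * ((c - \<theta>)^2 - (a - \<theta>)^2) + \<eta>^2)"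
    unfolding qscore_def by (simp add: algebra_simps power2_eq_square)
  also have "\<dots> \<le> exp (\<eta> * ((c - \<theta>)^2 - (a - \<theta>)^2) + \<eta>^2)" by (rule exp_ge_add_one_self)
  finally show ?thesis .
qed

lemma mgf_bound:
  assumes "valid_vec m a" "valid_vec m c" "valid_vec m \<theta>" "0 \<le> \<eta>" "\<eta> \<le> 1"
  shows "(\<Sum>y\<in>outcomes m. bprob m \<theta> y * exp (\<eta> * (total_score m a y - total_score m c y)))
    \<le> exp (\<eta> * ((\<Sum>t<m. (c t - \<theta> t)^2) - (\<Sum>t<m. (a t - \<theta> t)^2)) + real m * \<eta>^2)"
proof -
  define g where "g t b = exp (\<eta> * (qscore (a t) b - qscore (c t) b))" for t b
  have "\<And>y. exp (\<eta> * (total_score m a y - total_score m c y)) = (\<Prod>t<m. g t (y t))"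
    unfolding g_def total_score_def by (simp add: exp_sum[symmetric] sum_subtractf[symmetric] sum_distrib_left)
  then have "(\<Sum>y\<in>outcomes m. bprob m \<theta> y * exp (\<eta> * (total_score m a y - total_score m c y)))
      = (\<Prod>t<m. \<theta> t * g t True + (1 - \<theta> t) * g t False)"
    by (simp add: sum_bprob_prod)
  also have "\<dots> \<le> (\<Prod>t<m. exp (\<eta> * ((c t - \<theta> t)^2 - (a t - \<theta> t)^2) + \<eta>^2))"
  proof (rule prod_mono)
    fix t assume "t \<in> {..<m}"
    then have "0 \<le> a t" "a t \<le> 1" "0 \<le> c t" "c t \<le> 1" "0 \<le> \<theta> t" "\<theta> t \<le> 1"
      using assms unfolding valid_vec_def by auto
    then show "0 \<le> \<theta> t * g t True + (1 - \<theta> t) * g t False \<and>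
          \<theta> t * g t True + (1 - \<theta> t) * g t False \<le> exp (\<eta> * ((c t - \<theta> t)^2 - (a t - \<theta> t)^2) + \<eta>^2)"
      using factor_bound[of "a t" "c t" "\<theta> t" \<eta>] assms unfolding g_def by auto
  qed
  also have "\<dots> = exp (\<Sum>t<m. \<eta> * ((c t - \<theta> t)^2 - (a t - \<theta> t)^2) + \<eta>^2)"
    by (simp add: exp_sum)
  also have "(\<Sum>t<m. \<eta> * ((c t - \<theta> t)^2 - (a t - \<theta> t)^2) + \<eta>^2) =
     \<eta> * ((\<Sum>t<m. (c t - \<theta> t)^2) - (\<Sum>t<m. (a t - \<theta> t)^2)) + real m * \<eta>^2"
    by (simp add: sum.distrib sum_subtractf sum_distrib_left right_diff_distrib)
  finally show ?thesis .
qed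

lemma MW_sum1:
  assumes "n > 0"
  shows "(\<Sum>j<n. MW \<eta> n m R y j) = 1"
proof -
  have "(\<Sum>j<n. exp (\<eta> * total_score m (R j) y)) > 0" using assms by (intro sum_pos) auto
  then show ?thesis unfolding MW_def by (simp add: sum_divide_distrib[symmetric])
qed

lemma MW_le:
  assumes "k < n"
  shows "MW \<eta> n m R y j \<le> exp (\<eta> * (total_score m (R j) y - total_score m (R k) y))"
proof -
  have "exp (\<eta> * total_score m (R k) y) \<le> (\<Sum>j<n. exp (\<eta> * total_score m (R j) y))"
    using assms by (intro member_le_sum) auto
  moreover have "(\<Sum>j<n. exp (\<eta> * total_score m (R j) y)) > 0" using assms by (intro sum_pos) auto
  ultimately have "MW \<eta> n m R y j \<le> exp (\<eta> * total_score m (R j) y) / exp (\<eta> * total_score m (R k) y)"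
    unfolding MW_def by (intro divide_left_mono) auto
  also have "\<dots> = exp (\<eta> * (total_score m (R j) y - total_score m (R k) y))"
    by (simp add: exp_diff[symmetric] algebra_simps)
  finally show ?thesis .
qed

lemma sq_close:
  fixes r p \<theta> \<eta> :: real
  assumes "0 \<le> r" "r \<le> 1" "0 \<le> p" "p \<le> 1" "0 \<le> \<theta>" "\<theta> \<le> 1" "\<bar>r - p\<bar> \<le> 4*\<eta>"
  shows "\<bar>(r - \<theta>)^2 - (p - \<theta>)^2\<bar> \<le> 8*\<eta>"
proof -
  have "(r - \<theta>)^2 - (p - \<theta>)^2 = (r - p) * (r + p - 2*\<theta>)" by (simp add: algebra_simps power2_eq_square)
  moreover have "\<bar>r + p - 2*\<theta>\<bar> \<le> 2" using assms by auto
  ultimately have "\<bar>(r - \<theta>)^2 - (p - \<theta>)^2\<bar> = \<bar>r - p\<bar> * \<bar>r + p - 2*\<theta>\<bar>"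
    by (simp add: abs_mult)
  also have "\<dots> \<le> 4*\<eta> * 2"
    using assms \<open>\<bar>r + p - 2*\<theta>\<bar> \<le> 2\<close> by (intro mult_mono) auto
  finally have "\<bar>(r - \<theta>)^2 - (p - \<theta>)^2\<bar> \<le> 4*\<eta> * 2" .
  then show ?thesis by simp
qed

lemma sum_sq_close:
  assumes "valid_vec m r" "valid_vec m p" "valid_vec m \<theta>" "\<forall>t<m. \<bar>r t - p t\<bar> \<le> 4*\<eta>"
  shows "\<bar>(\<Sum>t<m. (r t - \<theta> t)^2) - (\<Sum>t<m. (p t - \<theta> t)^2)\<bar> \<le> real m * (8*\<eta>)"
proof -
  have "\<bar>(\<Sum>t<m. (r t - \<theta> t)^2) - (\<Sum>t<m. (p t - \<theta> t)^2)\<bar> = \<bar>\<Sum>t<m. (r t - \<theta> t)^2 - (p t - \<theta> t)^2\<bar>"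
    by (simp add: sum_subtractf)
  also have "\<dots> \<le> (\<Sum>t<m. \<bar>(r t - \<theta> t)^2 - (p t - \<theta> t)^2\<bar>)" by (rule sum_abs)
  also have "\<dots> \<le> (\<Sum>t<m. 8*\<eta>)"
    using assms unfolding valid_vec_def by (intro sum_mono sq_close) auto
  finally show ?thesis by simp
qed

lemma mw_acc:
  assumes n2: "n \<ge> 2" and eps: "0 < \<epsilon>" "\<epsilon> \<le> 1" and del: "0 < \<delta>" "\<delta> < 1"
    and eta: "0 < \<eta>" "\<eta> \<le> \<epsilon> / 40"
    and mbig: "real m \<ge> 5 * ln (2 * real n / \<delta>) / (\<eta> * \<epsilon>)"
    and vP: "\<forall>i<n. valid_vec m (P i)" and vth: "valid_vec m \<theta>"
  shows "mw_accurate \<eta> n m P \<theta> \<epsilon> \<delta>"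
  unfolding mw_accurate_def
proof (intro allI impI)
  fix R assume und: "\<forall>i<n. undominated \<eta> n m i (P i) (R i)"
  define L where "L = ln (2 * real n / \<delta>)"
  have "2 * real n / \<delta> > 1" using n2 del by (simp add: field_simps)
  then have L0: "L > 0" unfolding L_def by simp
  have ee: "\<eta> * \<epsilon> > 0" using eta eps by simp
  have "5 * L / (\<eta> * \<epsilon>) > 0" using L0 ee by simp
  then have mpos: "real m > 0" using mbig unfolding L_def by linarith
  have mL: "\<eta> * \<epsilon> * real m \<ge> 5 * L" using mbig ee unfolding L_def by (simp add: pos_divide_le_eq mult.commute)
  have vR: "\<forall>i<n. valid_vec m (R i)" using und by (auto simp: undominated_def)
  have close: "\<forall>t<m. \<bar>R i t - P i t\<bar> \<le> 4*\<eta>" if "i < n" for i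
    using undom_close[OF n2 that eta(1) _ _] vP und that by auto
  have eta1: "\<eta> \<le> 1" using eta eps by simp
  let ?acc = "\<lambda>j. accuracy m (P j) \<theta>"
  have "(MAX j\<in>{..<n}. ?acc j) \<in> ?acc ` {..<n}" using n2 by (intro Max_in) (auto simp: lessThan_empty_iff)
  then obtain k where k: "k < n" "?acc k = (MAX j\<in>{..<n}. ?acc j)" by auto
  define Opt where "Opt = {i. i < n \<and> eps_optimal n m P \<theta> \<epsilon> i}"
  define Bad where "Bad = {..<n} - Opt"
  have bad: "(\<Sum>y\<in>outcomes m. bprob m \<theta> y * MW \<eta> n m R y j) \<le> \<delta> / (2 * real n)" if j: "j \<in> Bad" for j
  proof -
    have jn: "j < n" using j unfolding Bad_def by auto
    define sa where "sa = (\<Sum>t<m. (R j t - \<theta> t)^2)"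
    define sc where "sc = (\<Sum>t<m. (R k t - \<theta> t)^2)"
    define spj where "spj = (\<Sum>t<m. (P j t - \<theta> t)^2)"
    define spk where "spk = (\<Sum>t<m. (P k t - \<theta> t)^2)"
    have "\<not> ?acc j \<ge> ?acc k - \<epsilon>" using j k unfolding Bad_def Opt_def eps_optimal_def by auto
    then have "1 - spj / real m < 1 - spk / real m - \<epsilon>"
      unfolding accuracy_def spj_def spk_def by simp
    then have "spk / real m + \<epsilon> < spj / real m" by simp
    then have "(spk / real m + \<epsilon>) * real m < (spj / real m) * real m"
      using mpos by (intro mult_strict_right_mono) auto
    then have s1: "spk + \<epsilon> * real m < spj" using mpos by (simp add: algebra_simps)
    have s2: "\<bar>sa - spj\<bar> \<le> real m * (8*\<eta>)"
      unfolding sa_def spj_def using sum_sq_close[of m "R j" "P j" \<theta> \<eta>] vR vP vth close[OF jn] jn by auto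
    have s3: "\<bar>sc - spk\<bar> \<le> real m * (8*\<eta>)"
      unfolding sc_def spk_def using sum_sq_close[of m "R k" "P k" \<theta> \<eta>] vR vP vth close[OF k(1)] k by auto
    have e1: "real m * (8*\<eta>) = 8 * (\<eta> * real m)" "16 * \<eta> * real m = 16 * (\<eta> * real m)" by simp_all
    have d: "sc - sa \<le> 16 * \<eta> * real m - \<epsilon> * real m" using s1 s2 s3 unfolding e1 abs_le_iff by linarith
    have "\<eta> * (sc - sa) + real m * \<eta>^2 \<le> \<eta> * (16 * \<eta> * real m - \<epsilon> * real m) + real m * \<eta>^2"
      using d eta by (intro add_right_mono mult_left_mono) auto
    also have "\<dots> = (\<eta> * real m) * (17 * \<eta> - \<epsilon>)" by (simp add: algebra_simps power2_eq_square)
    also have "\<dots> \<le> (\<eta> * real m) * (- \<epsilon> / 2)"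
      using eta mpos by (intro mult_left_mono) auto
    also have "\<dots> = - (\<eta> * \<epsilon> * real m) / 2" by simp
    also have "\<dots> \<le> - L" using mL L0 by simp
    finally have ex: "\<eta> * (sc - sa) + real m * \<eta>^2 \<le> - L" .
    have "(\<Sum>y\<in>outcomes m. bprob m \<theta> y * MW \<eta> n m R y j)
        \<le> (\<Sum>y\<in>outcomes m. bprob m \<theta> y * exp (\<eta> * (total_score m (R j) y - total_score m (R k) y)))"
      using bprob_nonneg[OF vth] MW_le[OF k(1)] by (intro sum_mono mult_left_mono) auto
    also have "\<dots> \<le> exp (\<eta> * (sc - sa) + real m * \<eta>^2)"
      unfolding sa_def sc_def using mgf_bound[of m "R j" "R k" \<theta> \<eta>] vR jn k vth eta eta1 by auto
    also have "\<dots> \<le> exp (- L)" using ex by simp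
    also have "exp (- L) = \<delta> / (2 * real n)"
      unfolding L_def using n2 del by (simp add: exp_minus exp_ln)
    finally show ?thesis .
  qed
  have OptB: "Opt \<subseteq> {..<n}" unfolding Opt_def by auto
  have split: "(\<Sum>i\<in>Opt. MW \<eta> n m R y i) = 1 - (\<Sum>j\<in>Bad. MW \<eta> n m R y j)" for y
  proof -
    have "(\<Sum>j<n. MW \<eta> n m R y j) = (\<Sum>i\<in>Opt. MW \<eta> n m R y i) + (\<Sum>j\<in>Bad. MW \<eta> n m R y j)"
      unfolding Bad_def using OptB by (subst sum.subset_diff[OF OptB]) auto
    then show ?thesis using MW_sum1[of n] n2 by simp
  qed
  have eq1: "(\<Sum>y\<in>outcomes m. bprob m \<theta> y * (\<Sum>i\<in>Opt. MW \<eta> n m R y i))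
      = (\<Sum>y\<in>outcomes m. bprob m \<theta> y) - (\<Sum>y\<in>outcomes m. \<Sum>j\<in>Bad. bprob m \<theta> y * MW \<eta> n m R y j)"
    unfolding split by (simp add: right_diff_distrib sum_subtractf sum_distrib_left)
  have "(\<Sum>y\<in>outcomes m. \<Sum>j\<in>Bad. bprob m \<theta> y * MW \<eta> n m R y j)
      = (\<Sum>j\<in>Bad. \<Sum>y\<in>outcomes m. bprob m \<theta> y * MW \<eta> n m R y j)" by (rule sum.swap)
  also have "\<dots> \<le> real (card Bad) * (\<delta> / (2 * real n))"
    using bad by (rule sum_bounded_above)
  also have "\<dots> \<le> real n * (\<delta> / (2 * real n))"
  proof -
    have "card Bad \<le> n" unfolding Bad_def by (metis card_Diff_subset card_lessThan diff_le_self finite_lessThan OptB finite_subset)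
    then show ?thesis using del by (intro mult_right_mono) auto
  qed
  also have "\<dots> = \<delta> / 2" using n2 by simp
  finally have b2: "(\<Sum>y\<in>outcomes m. \<Sum>j\<in>Bad. bprob m \<theta> y * MW \<eta> n m R y j) \<le> \<delta> / 2" .
  show "(\<Sum>y\<in>outcomes m. bprob m \<theta> y * (\<Sum>i\<in>{i. i < n \<and> eps_optimal n m P \<theta> \<epsilon> i}. MW \<eta> n m R y i)) \<ge> 1 - \<delta>"
    unfolding Opt_def[symmetric] eq1 sum_bprob using del b2 by linarith
qed

theorem mainTheorem10:
  fixes n :: nat and \<epsilon> \<delta> \<eta> :: real
  assumes "n \<ge> 2"
    and "0 < \<epsilon>" and "\<epsilon> \<le> 1"
    and "0 < \<delta>" and "\<delta> < 1"
    and "0 < \<eta>" and "\<eta> \<le> \<epsilon> / 40"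
  shows "(\<forall>m. approx_truthful \<eta> n m (4 * \<eta>))
    \<and> (\<forall>m P \<theta>. real m \<ge> 5 * ln (2 * real n / \<delta>) / (\<eta> * \<epsilon>) \<longrightarrow>
          (\<forall>i<n. valid_vec m (P i)) \<longrightarrow> valid_vec m \<theta> \<longrightarrow>
          mw_accurate \<eta> n m P \<theta> \<epsilon> \<delta>)
    \<and> real (event_complexity (\<epsilon> / 40) n \<epsilon> \<delta>)
        \<le> real_of_int \<lceil>200 * ln (2 * real n / \<delta>) / \<epsilon>^2\<rceil>"
proof (intro conjI allI impI)
  fix m
  show "approx_truthful \<eta> n m (4 * \<eta>)"
    unfolding approx_truthful_def
    using undom_exists[OF assms(1)] undom_close[OF assms(1) _ assms(6)] by blast
next
  fix m P \<theta>
  assume "real m \<ge> 5 * ln (2 * real n / \<delta>) / (\<eta> * \<epsilon>)" "\<forall>i<n. valid_vec m (P i)" "valid_vec m \<theta>"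
  then show "mw_accurate \<eta> n m P \<theta> \<epsilon> \<delta>"
    using mw_acc[OF assms(1-5) assms(6,7)] by blast
next
  define L where "L = ln (2 * real n / \<delta>)"
  have "2 * real n / \<delta> > 1" using assms by (simp add: field_simps)
  then have L0: "L > 0" unfolding L_def by simp
  define c where "c = \<lceil>200 * L / \<epsilon>^2\<rceil>"
  have p: "200 * L / \<epsilon>^2 > 0" using L0 assms(2) by simp
  have c0: "c \<ge> 0" using p unfolding c_def by (simp add: zero_le_ceiling)
  define M where "M = nat c"
  have rM: "real M = real_of_int c" unfolding M_def using c0 by simp
  have "real M \<ge> 200 * L / \<epsilon>^2" unfolding rM c_def by (rule le_of_int_ceiling)
  moreover have "5 * L / (\<epsilon> / 40 * \<epsilon>) = 200 * L / \<epsilon>^2" using assms by (simp add: field_simps power2_eq_square)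
  ultimately have Mb: "real M \<ge> 5 * ln (2 * real n / \<delta>) / (\<epsilon> / 40 * \<epsilon>)" unfolding L_def by linarith
  have "\<forall>P \<theta>. (\<forall>i<n. valid_vec M (P i)) \<and> valid_vec M \<theta> \<longrightarrow> mw_accurate (\<epsilon> / 40) n M P \<theta> \<epsilon> \<delta>"
    using mw_acc[OF assms(1-5), of "\<epsilon> / 40" M] Mb assms by auto
  then have "event_complexity (\<epsilon> / 40) n \<epsilon> \<delta> \<le> M"
    unfolding event_complexity_def by (rule Least_le)
  then show "real (event_complexity (\<epsilon> / 40) n \<epsilon> \<delta>) \<le> real_of_int \<lceil>200 * ln (2 * real n / \<delta>) / \<epsilon>^2\<rceil>"
    using rM unfolding c_def L_def by linarith
qed

end
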